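(* Let $m=n=1$, $\boldsymbol s=(s_1,s_2)\in\{(1,-1),(-1,1)\}$ and $\tilde{\boldsymbol s}=(s_2,s_1)$. Let $\boldsymbol\lambda$ be typical, $\boldsymbol z$ $h$-generic, let $y$ be a polynomial of degree $l$ representing a solution of the BAE associated to $\boldsymbol s,\boldsymbol\lambda,\boldsymbol z,l$, and let $\tilde y$ be the polynomial with $y\,\tilde y[-s_1]=\varphi^{\boldsymbol s}-\psi^{\boldsymbol s}$. Then \[s_1\frac{T_1^{\boldsymbol s}y[s_1]}{T_1^{\boldsymbol s}[s_1]y}+s_2\frac{T_2^{\boldsymbol s}y[-s_2]}{T_2^{\boldsymbol s}[s_2]y}=\tilde s_1\frac{T_1^{\tilde{\boldsymbol s}}\tilde y[\tilde s_1]}{T_1^{\tilde{\boldsymbol s}}[\tilde s_1]\tilde y}+\tilde s_2\frac{T_2^{\tilde{\boldsymbol s}}\tilde y[-\tilde s_2]}{T_2^{\tilde{\boldsymbol s}}[\tilde s_2]\tilde y}.\]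
   Context: Fix $h\in\mathbb{C}^\times$; $f[i](x)=f(x-ih)$. Polynomial $\mathfrak{gl}_{1|1}$ weights $\lambda^{(1)},\dots,\lambda^{(p)}$; for each $k$ write the weight of $\lambda^{(k)}$ with respect to $\boldsymbol s$ (eigenvalues of $e_{\sigma(1)\sigma(1)},e_{\sigma(2)\sigma(2)}$ on the $\boldsymbol s$-highest weight vector of $L_{\lambda^{(k)}}$, where $\sigma$ is the identity if $\boldsymbol s=(1,-1)$ and the transposition if $\boldsymbol s=(-1,1)$) as $(a_k,b_k)$, $a_k,b_k\in\mathbb{Z}_{\ge0}$, with $b_k=0$ whenever $a_k=0$. $\lambda^{(k)}$ is typical iff $a_k+b_k\ne0$; $\boldsymbol\lambda$ is typical if some $\lambda^{(k)}$ is typical. Set $\tilde a_k=b_k+1,\tilde b_k=a_k-1$ if $a_k+b_k\ne0$ and $\tilde a_k=\tilde b_k=0$ otherwise (these are the weights with respect to $\tilde{\boldsymbol s}$). $\boldsymbol z$ $h$-generic ($z_i-z_j\notin h\mathbb{Z}$). $T_1^{\boldsymbol s}=\prod_k\prod_{j=1}^{a_k}(x-z_k+s_1jh)$, $T_2^{\boldsymbol s}=\prod_k\prod_{j=1}^{b_k}(x-z_k+s_2jh)$, $T_1^{\tilde{\boldsymbol s}}=\prod_k\prod_{j=1}^{\tilde a_k}(x-z_k+\tilde s_1jh)$, $T_2^{\tilde{\boldsymbol s}}=\prod_k\prod_{j=1}^{\tilde b_k}(x-z_k+\tilde s_2jh)$. $\varphi^{\boldsymbol s}=\prod_{k:a_k+b_k\ne0}(x-z_k+s_1a_kh)$,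 $\psi^{\boldsymbol s}=\prod_{k:a_k+b_k\ne0}(x-z_k+s_2b_kh)$. The BAE associated to $\boldsymbol s,\boldsymbol\lambda,\boldsymbol z,l$ in $t_1,\dots,t_l$: $\prod_{k:a_k+b_k\ne0}\frac{t_j-z_k+s_1a_kh}{t_j-z_k+s_2b_kh}=1$, $j=1,\dots,l$, with the requirement that a root of multiplicity $r$ of this equation appears at most $r$ times among the $t_j$; $y=\prod_j(x-t_j)$ represents $(t_1,\dots,t_l)$. *)

theory Defs
  imports Complex_Main "HOL-Computational_Algebra.Polynomial" "HOL-Computational_Algebra.Fraction_Field"
begin

definition shiftp :: "complex \<Rightarrow> int \<Rightarrow> complex poly \<Rightarrow> complex poly" where
  "shiftp h i f = pcompose f [:- (of_int i * h), 1:]"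

definition Tpoly :: "complex \<Rightarrow> (nat \<Rightarrow> complex) \<Rightarrow> nat \<Rightarrow> int \<Rightarrow> (nat \<Rightarrow> nat) \<Rightarrow> complex poly" where
  "Tpoly h z p s c = (\<Prod>k<p. \<Prod>j\<in>{1..c k}. [:- z k + of_int s * of_nat j * h, 1:])"

text \<open>phi^s (with c = a, sgn = s1) and psi^s (with c = b, sgn = s2):
  product over typical k of (x - z_k + sgn c_k h).\<close>
definition phipoly :: "complex \<Rightarrow> (nat \<Rightarrow> complex) \<Rightarrow> nat \<Rightarrow> (nat \<Rightarrow> nat) \<Rightarrow> (nat \<Rightarrow> nat)
    \<Rightarrow> int \<Rightarrow> (nat \<Rightarrow> nat) \<Rightarrow> complex poly" where
  "phipoly h z p a b s c = (\<Prod>k\<in>{k. k < p \<and> a k + b k \<noteq> 0}. [:- z k + of_int s * of_nat (c k) * h, 1:])"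

text \<open>Weights with respect to the swapped parity sequence.\<close>
definition atil :: "(nat \<Rightarrow> nat) \<Rightarrow> (nat \<Rightarrow> nat) \<Rightarrow> nat \<Rightarrow> nat" where
  "atil a b k = (if a k + b k \<noteq> 0 then b k + 1 else 0)"
definition btil :: "(nat \<Rightarrow> nat) \<Rightarrow> (nat \<Rightarrow> nat) \<Rightarrow> nat \<Rightarrow> nat" where
  "btil a b k = (if a k + b k \<noteq> 0 then a k - 1 else 0)"

definition h_generic :: "complex \<Rightarrow> nat \<Rightarrow> (nat \<Rightarrow> complex) \<Rightarrow> bool" where
  "h_generic h p z \<longleftrightarrow> (\<forall>i<p. \<forall>j<p. i \<noteq> j \<longrightarrow> (\<forall>m::int. z i - z j \<noteq> of_int m * h))"

end

theory Submission
  imports Defs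
begin

lemma shift_lin: "shiftp h i [:c, 1:] = [:c - of_int i * h, 1:]"
  by (simp add: shiftp_def pcompose_pCons)

lemma shift_mult: "shiftp h i (f * g) = shiftp h i f * shiftp h i g"
  by (simp add: shiftp_def pcompose_mult)

lemma shift_diff: "shiftp h i (f - g) = shiftp h i f - shiftp h i g"
  by (simp add: shiftp_def pcompose_diff)

lemma shift_prod: "shiftp h i (prod f A) = (\<Prod>k\<in>A. shiftp h i (f k))"
  by (simp add: shiftp_def pcompose_prod)

lemma shift_shift: "shiftp h i (shiftp h j f) = shiftp h (i + j) f"
  unfolding shiftp_def pcompose_assoc[symmetric]
  by (simp add: pcompose_pCons algebra_simps)

lemma shift_0: "shiftp h 0 f = f"
  by (simp add: shiftp_def)

lemma shift_nz: "f \<noteq> 0 \<Longrightarrow> shiftp h i f \<noteq> 0"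
  unfolding shiftp_def using pcompose_eq_0[of f "[:- (of_int i * h), 1:]"] by auto

lemma perk: "(\<Prod>j\<in>{1..n}. [:c + of_int s * of_nat j * h, 1:]) * [:c, 1:]
   = shiftp h s (\<Prod>j\<in>{1..n}. [:c + of_int s * of_nat j * h, 1:]) * [:c + of_int s * of_nat n * h, 1:]"
proof (induction n)
  case 0
  then show ?case by (simp add: shiftp_def pcompose_1)
next
  case (Suc n)
  define L where "L = (\<lambda>j::nat. [:c + of_int s * of_nat j * h, 1:])"
  define P where "P = (\<lambda>n. \<Prod>j\<in>{1..n}. L j)"
  have e: "{1..Suc n} = insert (Suc n) {1..n}" by auto
  have PS: "P (Suc n) = L (Suc n) * P n" unfolding P_def e by simp
  have IH: "P n * [:c, 1:] = shiftp h s (P n) * L n" using Suc unfolding P_def L_def .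
  have sh: "L n = shiftp h s (L (Suc n))"
    unfolding L_def by (simp add: shift_lin algebra_simps)
  have "P (Suc n) * [:c, 1:] = (P n * [:c, 1:]) * L (Suc n)" unfolding PS by (simp only: mult_ac)
  also have "\<dots> = shiftp h s (P n) * shiftp h s (L (Suc n)) * L (Suc n)" using IH sh by simp
  also have "\<dots> = shiftp h s (P (Suc n)) * L (Suc n)" by (simp add: PS shift_mult mult_ac)
  finally show ?case unfolding P_def L_def .
qed

lemma G:
  assumes "\<And>k. k < p \<Longrightarrow> \<not> P k \<Longrightarrow> c k = 0"
  shows "Tpoly h z p s c * (\<Prod>k\<in>{k. k < p \<and> P k}. [:- z k, 1:])
    = shiftp h s (Tpoly h z p s c) * (\<Prod>k\<in>{k. k < p \<and> P k}. [:- z k + of_int s * of_nat (c k) * h, 1:])"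
proof -
  let ?K = "{k. k < p \<and> P k}"
  let ?Q = "\<lambda>k. \<Prod>j\<in>{1..c k}. [:- z k + of_int s * of_nat j * h, 1:]"
  have T: "Tpoly h z p s c = prod ?Q ?K"
    unfolding Tpoly_def
    by (rule prod.mono_neutral_right) (auto simp: assms)
  have "prod ?Q ?K * (\<Prod>k\<in>?K. [:- z k, 1:]) = (\<Prod>k\<in>?K. ?Q k * [:- z k, 1:])"
    by (rule prod.distrib[symmetric])
  also have "\<dots> = (\<Prod>k\<in>?K. shiftp h s (?Q k) * [:- z k + of_int s * of_nat (c k) * h, 1:])"
    by (rule prod.cong[OF refl]) (rule perk)
  also have "\<dots> = shiftp h s (prod ?Q ?K) * (\<Prod>k\<in>?K. [:- z k + of_int s * of_nat (c k) * h, 1:])"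
    by (simp only: prod.distrib shift_prod)
  finally show ?thesis using T by simp
qed

lemma key:
  fixes S Z T1 T1s T2 T2s U1 U1s U2 U2s y yt y1 w ph ps phB psB :: "'a::field"
  assumes nz: "Z \<noteq> 0" "T1s \<noteq> 0" "T2s \<noteq> 0" "U1s \<noteq> 0" "U2s \<noteq> 0" "y \<noteq> 0" "yt \<noteq> 0"
    and A: "T1 * Z = T1s * ph" and B: "T2 * Z = T2s * ps" and C: "U1 * Z = U1s * psB"
    and D: "U2 * Z = U2s * phB" and E: "y * w = ph - ps" and F: "y1 * yt = phB - psB"
  shows "S * ((T1 * y1) / (T1s * y)) + (- S) * ((T2 * y1) / (T2s * y))
       = (- S) * ((U1 * w) / (U1s * yt)) + S * ((U2 * w) / (U2s * yt))"
proof -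
  have a: "T1 / T1s = ph / Z" using A nz by (simp add: field_simps)
  have b: "T2 / T2s = ps / Z" using B nz by (simp add: field_simps)
  have c: "U1 / U1s = psB / Z" using C nz by (simp add: field_simps)
  have d: "U2 / U2s = phB / Z" using D nz by (simp add: field_simps)
  have "S * ((T1 * y1) / (T1s * y)) + (- S) * ((T2 * y1) / (T2s * y))
      = S * y1 / y * (T1 / T1s - T2 / T2s)" using nz by (simp add: field_simps)
  also have "\<dots> = S * y1 / y * ((ph - ps) / Z)" by (simp add: a b diff_divide_distrib)
  also have "\<dots> = S * y1 / y * ((y * w) / Z)" by (simp add: E)
  also have "\<dots> = S * y1 * w / Z" using nz by (simp add: field_simps)
  also have "\<dots> = S * w / yt * ((y1 * yt) / Z)" using nz by (simp add: field_simps)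
  also have "\<dots> = S * w / yt * ((phB - psB) / Z)" by (simp add: F)
  also have "\<dots> = S * w / yt * (U2 / U2s - U1 / U1s)" by (simp add: c d diff_divide_distrib)
  also have "\<dots> = (- S) * ((U1 * w) / (U1s * yt)) + S * ((U2 * w) / (U2s * yt))" using nz by (simp add: field_simps)
  finally show ?thesis .
qed

definition FF :: "complex poly \<Rightarrow> complex poly fract" where "FF q = Fract q 1"

lemma Fract_FF: "Fract a b = FF a / FF b"
  by (simp add: FF_def)

lemma FF_mult: "FF (a * b) = FF a * FF b"
  by (simp add: FF_def)

lemma FF_diff: "FF (a - b) = FF a - FF b"
  by (simp add: FF_def)

lemma FF_nz: "a \<noteq> 0 \<Longrightarrow> FF a \<noteq> 0"
  by (simp add: FF_def Zero_fract_def eq_fract)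

lemma Tpoly_nz: "Tpoly h z p s c \<noteq> 0"
  unfolding Tpoly_def by (simp add: prod_zero_iff)

theorem lemma4p4:
  fixes h :: complex and p l :: nat and a b :: "nat \<Rightarrow> nat" and z :: "nat \<Rightarrow> complex"
    and s1 s2 :: int and y yt :: "complex poly"
  assumes h: "h \<noteq> 0"
    and s: "(s1, s2) \<in> {(1, -1), (-1, 1)}"
    and wt: "\<And>k. k < p \<Longrightarrow> a k = 0 \<Longrightarrow> b k = 0"
    and typical: "\<exists>k<p. a k + b k \<noteq> 0"
    and gen: "h_generic h p z"
    and ymonic: "lead_coeff y = 1" and ydeg: "degree y = l"
    and BAE: "\<And>t. poly y t = 0 \<Longrightarrow>
        poly (phipoly h z p a b s2 b) t \<noteq> 0 \<and>
        poly (phipoly h z p a b s1 a) t / poly (phipoly h z p a b s2 b) t = 1 \<and>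
        order t y \<le> order t (phipoly h z p a b s1 a - phipoly h z p a b s2 b)"
    and yt: "y * shiftp h (- s1) yt = phipoly h z p a b s1 a - phipoly h z p a b s2 b"
  shows "of_int s1 * Fract (Tpoly h z p s1 a * shiftp h s1 y) (shiftp h s1 (Tpoly h z p s1 a) * y)
       + of_int s2 * Fract (Tpoly h z p s2 b * shiftp h (- s2) y) (shiftp h s2 (Tpoly h z p s2 b) * y)
       = of_int s2 * Fract (Tpoly h z p s2 (atil a b) * shiftp h s2 yt)
                          (shiftp h s2 (Tpoly h z p s2 (atil a b)) * yt)
       + of_int s1 * Fract (Tpoly h z p s1 (btil a b) * shiftp h (- s1) yt)
                          (shiftp h s1 (Tpoly h z p s1 (btil a b)) * yt)"
proof -
  have s2: "s2 = - s1" and s1sq: "s1 = 1 \<or> s1 = -1" using s by auto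
  define K where "K = {k. k < p \<and> a k + b k \<noteq> 0}"
  have finK: "finite K" unfolding K_def by simp
  have aK: "\<And>k. k \<in> K \<Longrightarrow> a k \<ge> 1" using wt unfolding K_def by fastforce
  define Z where "Z = (\<Prod>k\<in>K. [:- z k, 1:])"
  define ph where "ph = phipoly h z p a b s1 a"
  define ps where "ps = phipoly h z p a b s2 b"
  have phK: "ph = (\<Prod>k\<in>K. [:- z k + of_int s1 * of_nat (a k) * h, 1:])"
    unfolding ph_def phipoly_def K_def ..
  have psK: "ps = (\<Prod>k\<in>K. [:- z k + of_int s2 * of_nat (b k) * h, 1:])"
    unfolding ps_def phipoly_def K_def ..
  have Znz: "Z \<noteq> 0" unfolding Z_def using finK by (simp add: prod_zero_iff)
  have A: "Tpoly h z p s1 a * Z = shiftp h s1 (Tpoly h z p s1 a) * ph"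
    unfolding Z_def phK K_def by (rule G) simp
  have B: "Tpoly h z p s2 b * Z = shiftp h s2 (Tpoly h z p s2 b) * ps"
    unfolding Z_def psK K_def by (rule G) simp
  have C: "Tpoly h z p s2 (atil a b) * Z = shiftp h s2 (Tpoly h z p s2 (atil a b)) * shiftp h s1 ps"
  proof -
    have "Tpoly h z p s2 (atil a b) * Z = shiftp h s2 (Tpoly h z p s2 (atil a b)) *
      (\<Prod>k\<in>K. [:- z k + of_int s2 * of_nat (atil a b k) * h, 1:])"
      unfolding Z_def K_def by (rule G) (simp add: atil_def)
    also have "(\<Prod>k\<in>K. [:- z k + of_int s2 * of_nat (atil a b k) * h, 1:]) = shiftp h s1 ps"
      unfolding psK shift_prod
      by (rule prod.cong[OF refl]) (auto simp: K_def atil_def shift_lin s2 algebra_simps)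
    finally show ?thesis .
  qed
  have D: "Tpoly h z p s1 (btil a b) * Z = shiftp h s1 (Tpoly h z p s1 (btil a b)) * shiftp h s1 ph"
  proof -
    have "Tpoly h z p s1 (btil a b) * Z = shiftp h s1 (Tpoly h z p s1 (btil a b)) *
      (\<Prod>k\<in>K. [:- z k + of_int s1 * of_nat (btil a b k) * h, 1:])"
      unfolding Z_def K_def by (rule G) (simp add: btil_def)
    also have "(\<Prod>k\<in>K. [:- z k + of_int s1 * of_nat (btil a b k) * h, 1:]) = shiftp h s1 ph"
      unfolding phK shift_prod
    proof (rule prod.cong[OF refl])
      fix k assume k: "k \<in> K"
      then have "a k \<ge> 1" by (rule aK)
      then have e: "of_nat (a k - Suc 0) = (of_nat (a k) - 1 :: complex)" by (simp add: of_nat_diff)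
      then show "[:- z k + of_int s1 * of_nat (btil a b k) * h, 1:] =
         shiftp h s1 [:- z k + of_int s1 * of_nat (a k) * h, 1:]"
        using k by (simp add: K_def btil_def shift_lin e algebra_simps)
    qed
    finally show ?thesis .
  qed
  have E: "y * shiftp h (- s1) yt = ph - ps" using yt unfolding ph_def ps_def .
  have F: "shiftp h s1 y * yt = shiftp h s1 ph - shiftp h s1 ps"
  proof -
    have "shiftp h s1 (y * shiftp h (- s1) yt) = shiftp h s1 (ph - ps)" using E by simp
    then show ?thesis by (simp add: shift_mult shift_diff shift_shift shift_0)
  qed
  have ynz: "y \<noteq> 0" using ymonic by auto
  have phps: "ph \<noteq> ps"
  proof
    assume eq: "ph = ps"
    obtain k0 where k0: "k0 \<in> K" using typical unfolding K_def by auto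
    define r where "r = z k0 - of_int s1 * of_nat (a k0) * h"
    have "poly ph r = 0" unfolding phK r_def using finK k0
      by (simp add: poly_prod prod_zero_iff) (rule bexI[of _ k0], simp_all)
    then have "poly ps r = 0" using eq by simp
    then obtain j where j: "j \<in> K" and "- z j + of_int s2 * of_nat (b j) * h + r = 0"
      unfolding psK using finK by (auto simp: poly_prod prod_zero_iff)
    then have rel: "z k0 - z j = of_int (s1 * int (a k0 + b j)) * h"
      unfolding r_def s2 by (simp add: algebra_simps)
    show False
    proof (cases "j = k0")
      case True
      have "a k0 \<ge> 1" using k0 by (rule aK)
      then have "s1 * int (a k0 + b j) \<noteq> 0" using s1sq by auto
      then have "of_int (s1 * int (a k0 + b j)) \<noteq> (0::complex)" by (simp only: of_int_eq_0_iff) simp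
      then show False using rel True h by simp
    next
      case False
      then show False using rel gen k0 j unfolding h_generic_def K_def by blast
    qed
  qed
  have ytnz: "yt \<noteq> 0" using E phps by (auto simp: shiftp_def)
  have key': "of_int s1 * ((FF (Tpoly h z p s1 a) * FF (shiftp h s1 y)) / (FF (shiftp h s1 (Tpoly h z p s1 a)) * FF y))
     + (- of_int s1) * ((FF (Tpoly h z p s2 b) * FF (shiftp h s1 y)) / (FF (shiftp h s2 (Tpoly h z p s2 b)) * FF y))
     = (- of_int s1) * ((FF (Tpoly h z p s2 (atil a b)) * FF (shiftp h (- s1) yt)) / (FF (shiftp h s2 (Tpoly h z p s2 (atil a b))) * FF yt))
     + of_int s1 * ((FF (Tpoly h z p s1 (btil a b)) * FF (shiftp h (- s1) yt)) / (FF (shiftp h s1 (Tpoly h z p s1 (btil a b))) * FF yt))"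
    by (rule key[where Z = "FF Z" and ph = "FF ph" and ps = "FF ps" and phB = "FF (shiftp h s1 ph)"
        and psB = "FF (shiftp h s1 ps)"])
      (simp_all add: FF_nz Znz Tpoly_nz shift_nz ynz ytnz FF_mult[symmetric] FF_diff[symmetric] A B C D E F)
  show ?thesis
    using key' unfolding Fract_FF FF_mult s2 by simp
qed

end
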